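(* Let $H$ be a complex infinite-dimensional separable Hilbert space and let $(f_n)_{n=1}^\infty$ be a frame for $H$ with optimal upper frame bound $B$ and analysis operator $U$, such that its excess $e((f_n)_{n=1}^\infty)$ is finite and $\dim\operatorname{Im}(B\cdot I-U^*U)<\infty$. Then $\sum_{n=1}^\infty(B-\|f_n\|^2)<\infty$.
   Context: The analysis operator is $U:H\to\ell^2$, $Ux=(\langle x,f_n\rangle)_n$. The optimal upper frame bound is the infimum of all $B$ with $\sum_n|\langle x,f_n\rangle|^2\le B\|x\|^2$ for all $x$. The excess of a frame is the maximal number of elements that can be deleted so that the remaining sequence is still a frame for $H$. *)

theory Defs
  imports "HOL-Analysis.Analysis" "HOL-Library.Extended_Nat"
begin

class complex_vector = real_vector +
  fixes scaleC :: "complex \<Rightarrow> 'a \<Rightarrow> 'a"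
  assumes scaleC_of_real: "scaleC (complex_of_real r) x = scaleR r x"
    and scaleC_add_right: "scaleC a (x + y) = scaleC a x + scaleC a y"
    and scaleC_add_left: "scaleC (a + b) x = scaleC a x + scaleC b x"
    and scaleC_scaleC: "scaleC a (scaleC b x) = scaleC (a * b) x"
    and scaleC_one: "scaleC 1 x = x"

class complex_inner = complex_vector + real_normed_vector +
  fixes cinner :: "'a \<Rightarrow> 'a \<Rightarrow> complex"
  assumes cinner_commute: "cinner x y = cnj (cinner y x)"
    and cinner_add_left: "cinner (x + y) z = cinner x z + cinner y z"
    and cinner_scaleC_left: "cinner (scaleC c x) y = c * cinner x y"
    and cinner_self_Im: "Im (cinner x x) = 0"
    and cinner_self_Re_nonneg: "0 \<le> Re (cinner x x)"
    and cinner_self_eq_zero: "cinner x x = 0 \<longleftrightarrow> x = 0"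
    and norm_eq_sqrt_cinner: "norm x = sqrt (Re (cinner x x))"

definition cspan :: "'a::complex_vector set \<Rightarrow> 'a set" where
  "cspan S = {y. \<exists>F c. finite F \<and> F \<subseteq> S \<and> y = (\<Sum>x\<in>F. scaleC (c x) x)}"

definition finite_dim_c :: "'a::complex_vector set \<Rightarrow> bool" where
  "finite_dim_c V \<longleftrightarrow> (\<exists>F. finite F \<and> V \<subseteq> cspan F)"

definition frame_on :: "nat set \<Rightarrow> (nat \<Rightarrow> 'a::complex_inner) \<Rightarrow> bool" where
  "frame_on I f \<longleftrightarrow> (\<exists>A B. 0 < A \<and> (\<forall>x.
      (\<lambda>n. (cmod (cinner x (f n)))\<^sup>2) summable_on I \<and>
      A * (norm x)\<^sup>2 \<le> (\<Sum>\<^sub>\<infinity>n\<in>I. (cmod (cinner x (f n)))\<^sup>2) \<and>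
      (\<Sum>\<^sub>\<infinity>n\<in>I. (cmod (cinner x (f n)))\<^sup>2) \<le> B * (norm x)\<^sup>2))"

definition frame :: "(nat \<Rightarrow> 'a::complex_inner) \<Rightarrow> bool" where
  "frame f \<longleftrightarrow> frame_on UNIV f"

definition opt_upper_bound :: "(nat \<Rightarrow> 'a::complex_inner) \<Rightarrow> real" where
  "opt_upper_bound f = Inf {B. \<forall>x. (\<Sum>\<^sub>\<infinity>n. (cmod (cinner x (f n)))\<^sup>2) \<le> B * (norm x)\<^sup>2}"

text \<open>Frame operator U*U x = sum_n <x,f_n> f_n.\<close>
definition frame_op :: "(nat \<Rightarrow> 'a::complex_inner) \<Rightarrow> 'a \<Rightarrow> 'a" where
  "frame_op f x = (\<Sum>n. scaleC (cinner x (f n)) (f n))"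

definition ecard :: "'b set \<Rightarrow> enat" where
  "ecard S = (if finite S then enat (card S) else \<infinity>)"

definition excess :: "(nat \<Rightarrow> 'a::complex_inner) \<Rightarrow> enat" where
  "excess f = Sup {ecard S | S. frame_on (- S) f}"

end

theory Submission
  imports Defs
begin



global_interpretation cvs: vector_space "scaleC :: complex \<Rightarrow> 'a \<Rightarrow> 'a::complex_vector"
  by unfold_locales (auto simp: scaleC_add_right scaleC_add_left scaleC_scaleC scaleC_one)

lemma cspan_eq: "cspan S = cvs.span S"
  unfolding cspan_def cvs.span_explicit by blast

locale sesq =
  fixes ip :: "'a::complex_vector \<Rightarrow> 'a \<Rightarrow> complex"
  assumes ip_commute: "ip x y = cnj (ip y x)"
    and ip_add_left: "ip (x + y) z = ip x z + ip y z"
    and ip_scaleC_left: "ip (scaleC c x) y = c * ip x y"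
    and ip_self_Re_nonneg: "0 \<le> Re (ip x x)"
    and ip_self_eq_zero: "ip x x = 0 \<longleftrightarrow> x = 0"
begin

lemma ip_self_Im: "Im (ip x x) = 0"
proof -
  have "ip x x = cnj (ip x x)" by (rule ip_commute)
  then show ?thesis by (metis cnj.simps(2) complex.expand neg_equal_zero)
qed

lemma ip_self_real: "ip x x = complex_of_real (Re (ip x x))"
  using ip_self_Im by (simp add: complex_eq_iff)

lemma ip_add_right: "ip z (x + y) = ip z x + ip z y"
  by (metis ip_commute ip_add_left complex_cnj_add)

lemma ip_scaleC_right: "ip x (scaleC c y) = cnj c * ip x y"
  by (metis ip_commute ip_scaleC_left complex_cnj_mult)

lemma ip_zero_left[simp]: "ip 0 y = 0"
  by (metis add_cancel_right_right add_0 ip_add_left)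

lemma ip_zero_right[simp]: "ip x 0 = 0"
  by (metis ip_commute ip_zero_left complex_cnj_zero)

lemma ip_minus_left: "ip (- x) y = - ip x y"
  by (metis add.right_inverse add_eq_0_iff ip_add_left ip_zero_left)

lemma ip_minus_right: "ip x (- y) = - ip x y"
  by (metis ip_commute ip_minus_left complex_cnj_minus)

lemma ip_diff_left: "ip (x - y) z = ip x z - ip y z"
  by (simp only: diff_conv_add_uminus ip_add_left ip_minus_left)

lemma ip_diff_right: "ip z (x - y) = ip z x - ip z y"
  by (simp only: diff_conv_add_uminus ip_add_right ip_minus_right)

lemma ip_sum_left: "ip (sum g A) y = (\<Sum>a\<in>A. ip (g a) y)"
  by (induct A rule: infinite_finite_induct) (auto simp: ip_add_left)

lemma ip_sum_right: "ip y (sum g A) = (\<Sum>a\<in>A. ip y (g a))"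
  by (induct A rule: infinite_finite_induct) (auto simp: ip_add_right)

definition nrm :: "'a \<Rightarrow> real" where "nrm x = sqrt (Re (ip x x))"

lemma nrm_nonneg: "0 \<le> nrm x" using ip_self_Re_nonneg by (simp add: nrm_def)

lemma nrm_sq: "(nrm x)^2 = Re (ip x x)"
  using ip_self_Re_nonneg by (simp add: nrm_def)

lemma ip_self_nrm: "ip x x = complex_of_real ((nrm x)^2)"
  using ip_self_real nrm_sq by simp

lemma cauchy_schwarz: "cmod (ip x y) \<le> nrm x * nrm y"
proof (cases "y = 0")
  case True then show ?thesis by (simp add: nrm_def)
next
  case False
  define t where "t = ip x y / ip y y"
  have yy: "ip y y \<noteq> 0" using False ip_self_eq_zero by blast
  have "ip (x - scaleC t y) (x - scaleC t y)
      = ip x x - cnj t * ip x y - t * ip y x + t * cnj t * ip y y"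
    by (simp add: ip_diff_left ip_diff_right ip_scaleC_left ip_scaleC_right algebra_simps)
  also have "\<dots> = ip x x - ip x y * cnj (ip x y) / ip y y"
  proof -
    have c: "cnj (ip y y) = ip y y" by (metis ip_commute)
    have "cnj t = cnj (ip x y) / ip y y" by (simp add: t_def c)
    moreover have "ip y x = cnj (ip x y)" by (metis ip_commute)
    ultimately show ?thesis using yy unfolding t_def by (simp add: field_simps)
  qed
  finally have eq: "ip (x - scaleC t y) (x - scaleC t y) = ip x x - ip x y * cnj (ip x y) / ip y y" .
  have "0 \<le> Re (ip x x - ip x y * cnj (ip x y) / ip y y)"
    using ip_self_Re_nonneg eq by metis
  moreover have "ip x y * cnj (ip x y) = complex_of_real ((cmod (ip x y))^2)"
    by (rule complex_norm_square[symmetric])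
  ultimately have "0 \<le> Re (complex_of_real ((nrm x)^2) - complex_of_real ((cmod (ip x y))^2) / complex_of_real ((nrm y)^2))"
    by (simp only: ip_self_nrm[of x] ip_self_nrm[of y])
  then have h: "0 \<le> (nrm x)^2 - (cmod (ip x y))^2 / (nrm y)^2"
    by (simp only: of_real_divide[symmetric] of_real_diff[symmetric] Re_complex_of_real)
  have "(nrm y)^2 \<noteq> 0" using yy ip_self_nrm[of y] by auto
  then have "(nrm y)^2 > 0" by simp
  moreover from h have "(cmod (ip x y))^2 / (nrm y)^2 \<le> (nrm x)^2" by simp
  ultimately have "(cmod (ip x y))^2 \<le> (nrm x)^2 * (nrm y)^2"
    by (simp add: pos_divide_le_eq)
  then have "(cmod (ip x y))^2 \<le> (nrm x * nrm y)^2" by (simp add: power_mult_distrib)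
  then show ?thesis by (rule power2_le_imp_le[OF _ mult_nonneg_nonneg[OF nrm_nonneg nrm_nonneg]])
qed

lemma ip_scaleC_left_real: "ip (scaleC (complex_of_real r) x) y = complex_of_real r * ip x y"
  by (rule ip_scaleC_left)

definition orthonormal :: "'a set \<Rightarrow> bool" where
  "orthonormal U \<longleftrightarrow> (\<forall>u\<in>U. ip u u = 1) \<and> (\<forall>u\<in>U. \<forall>v\<in>U. u \<noteq> v \<longrightarrow> ip u v = 0)"

lemma ip_span_zero:
  assumes "\<And>s. s \<in> S \<Longrightarrow> ip s z = 0" and "x \<in> cvs.span S"
  shows "ip x z = 0"
  using assms(2)
proof (induct rule: cvs.span_induct_alt)
  case base then show ?case by simp
next
  case (step c x y) then show ?case using assms(1) by (simp add: ip_add_left ip_scaleC_left)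
qed

lemma ip_sum_scale_onb:
  assumes "finite U" "orthonormal U" "v \<in> U"
  shows "ip (\<Sum>u\<in>U. scaleC (c u) u) v = c v"
proof -
  have "ip (\<Sum>u\<in>U. scaleC (c u) u) v = (\<Sum>u\<in>U. c u * ip u v)"
    by (simp add: ip_sum_left ip_scaleC_left)
  also have "\<dots> = (\<Sum>u\<in>{v}. c u * ip u v)"
    using assms by (intro sum.mono_neutral_right) (auto simp: orthonormal_def)
  also have "\<dots> = c v" using assms by (simp add: orthonormal_def)
  finally show ?thesis .
qed

lemma onb_expand:
  assumes "finite U" "orthonormal U" "x \<in> cvs.span U"
  shows "x = (\<Sum>u\<in>U. scaleC (ip x u) u)"
proof -
  define y where "y = x - (\<Sum>u\<in>U. scaleC (ip x u) u)"
  have yspan: "y \<in> cvs.span U" unfolding y_def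
    by (rule cvs.span_diff[OF assms(3)]) (intro cvs.span_sum cvs.span_scale cvs.span_base; simp)
  have "ip y v = 0" if "v \<in> U" for v
    using that assms by (simp add: y_def ip_diff_left ip_sum_scale_onb)
  then have "ip v y = 0" if "v \<in> U" for v using that by (metis ip_commute complex_cnj_zero)
  then have "ip y y = 0" using ip_span_zero[OF _ yspan] by blast
  then have "y = 0" using ip_self_eq_zero by blast
  then show ?thesis unfolding y_def by simp
qed

lemma gram_schmidt:
  assumes "finite S"
  shows "\<exists>U. finite U \<and> orthonormal U \<and> cvs.span U = cvs.span S"
  using assms
proof (induct rule: finite_induct)
  case empty then show ?case by (intro exI[of _ "{}"]) (simp add: orthonormal_def)
next
  case (insert x S)
  then obtain U where U: "finite U" "orthonormal U" "cvs.span U = cvs.span S" by blast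
  define v where "v = x - (\<Sum>u\<in>U. scaleC (ip x u) u)"
  have vU: "ip v u = 0" if "u \<in> U" for u
    using that U by (simp add: v_def ip_diff_left ip_sum_scale_onb)
  have sumspan: "(\<Sum>u\<in>U. scaleC (ip x u) u) \<in> cvs.span U"
    by (intro cvs.span_sum cvs.span_scale cvs.span_base) auto
  show ?case
  proof (cases "v = 0")
    case True
    then have "x \<in> cvs.span U" using sumspan by (simp add: v_def)
    then have "x \<in> cvs.span S" using U by simp
    then show ?thesis using U by (intro exI[of _ U]) (simp add: cvs.span_redundant)
  next
    case False
    define w where "w = scaleC (complex_of_real (1 / nrm v)) v"
    have nv: "nrm v \<noteq> 0" using False ip_self_eq_zero ip_self_nrm by fastforce
    have ww: "ip w w = 1"
    proof -
      have "ip w w = complex_of_real (1 / nrm v) * cnj (complex_of_real (1 / nrm v)) * ip v v"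
        unfolding w_def by (simp add: ip_scaleC_left ip_scaleC_right mult_ac)
      also have "\<dots> = complex_of_real (1 / nrm v * (1 / nrm v) * (nrm v)^2)"
        by (simp only: ip_self_nrm[of v] complex_cnj_complex_of_real of_real_mult)
      also have "\<dots> = 1" using nv by (simp add: power2_eq_square)
      finally show ?thesis .
    qed
    have wU: "ip w u = 0" if "u \<in> U" for u
      using vU[OF that] by (simp add: w_def ip_scaleC_left)
    have uw: "ip u w = 0" if "u \<in> U" for u
      using wU[OF that] by (metis ip_commute complex_cnj_zero)
    have wnotU: "w \<notin> U"
    proof
      assume "w \<in> U"
      then have "ip w w = 0" by (rule wU)
      with ww show False by simp
    qed
    have orth: "orthonormal (insert w U)"
      using U(2) ww wU uw wnotU unfolding orthonormal_def by (simp add: ball_simps)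
    have sub: "A \<subseteq> cvs.span (insert a A)" for a A
      using cvs.span_superset[of "insert a A"] by blast
    have vsp: "v \<in> cvs.span (insert x U)"
      unfolding v_def
    proof (rule cvs.span_diff)
      show "x \<in> cvs.span (insert x U)" by (rule cvs.span_base) simp
      show "(\<Sum>u\<in>U. scaleC (ip x u) u) \<in> cvs.span (insert x U)"
        using sumspan cvs.span_mono[of U "insert x U"] by blast
    qed
    have wsp: "w \<in> cvs.span (insert x U)" unfolding w_def by (rule cvs.span_scale[OF vsp])
    have vw: "v = scaleC (complex_of_real (nrm v)) w"
      unfolding w_def using nv by (simp add: scaleC_scaleC)
    have xeq: "x = v + (\<Sum>u\<in>U. scaleC (ip x u) u)" by (simp add: v_def)
    have xsp: "x \<in> cvs.span (insert w U)"
    proof -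
      have "v \<in> cvs.span (insert w U)"
        by (subst vw, rule cvs.span_scale, rule cvs.span_base, simp)
      moreover have "(\<Sum>u\<in>U. scaleC (ip x u) u) \<in> cvs.span (insert w U)"
        using sumspan cvs.span_mono[of U "insert w U"] by blast
      ultimately show ?thesis by (subst xeq, rule cvs.span_add)
    qed
    have "cvs.span (insert w U) = cvs.span (insert x U)"
      unfolding cvs.span_eq using wsp xsp sub[of U w] sub[of U x] by auto
    also have "\<dots> = cvs.span (insert x S)"
      by (simp add: cvs.span_insert U(3))
    finally show ?thesis using orth U(1) by (intro exI[of _ "insert w U"]) simp
  qed
qed

end




lemma cmod_prod_le: "cmod (a * b) \<le> ((cmod a)^2 + (cmod b)^2) / 2"
proof -
  have "0 \<le> (cmod a - cmod b)^2" by simp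
  then show ?thesis by (simp add: norm_mult power2_eq_square algebra_simps)
qed

lemma sq_summable_prod:
  assumes "summable (\<lambda>k. (cmod (a k))^2)" "summable (\<lambda>k. (cmod (b k))^2)"
  shows "summable (\<lambda>k. cmod (a k * b k))"
proof (rule summable_comparison_test[of _ "\<lambda>k. ((cmod (a k))^2 + (cmod (b k))^2) / 2"])
  show "\<exists>N. \<forall>n\<ge>N. norm (cmod (a n * b n)) \<le> ((cmod (a n))\<^sup>2 + (cmod (b n))\<^sup>2) / 2"
    using cmod_prod_le by auto
  show "summable (\<lambda>k. ((cmod (a k))^2 + (cmod (b k))^2) / 2)"
    using assms by (intro summable_divide summable_add)
qed

lemma sq_summable_prod':
  assumes "summable (\<lambda>k. (cmod (a k))^2)" "summable (\<lambda>k. (cmod (b k))^2)"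
  shows "summable (\<lambda>k. a k * b k)"
  using sq_summable_prod[OF assms] summable_norm_cancel by (metis norm_mult)

lemma sq_summable_add:
  assumes "summable (\<lambda>k. (cmod (a k))^2)" "summable (\<lambda>k. (cmod (b k))^2)"
  shows "summable (\<lambda>k. (cmod (a k + b k))^2)"
proof (rule summable_comparison_test[of _ "\<lambda>k. 2 * (cmod (a k))^2 + 2 * (cmod (b k))^2"])
  have "(cmod (a n + b n))^2 \<le> 2 * (cmod (a n))^2 + 2 * (cmod (b n))^2" for n
  proof -
    have "cmod (a n + b n) \<le> cmod (a n) + cmod (b n)" by (rule norm_triangle_ineq)
    then have "(cmod (a n + b n))^2 \<le> (cmod (a n) + cmod (b n))^2"
      by (simp add: power_mono)
    also have "\<dots> \<le> 2 * (cmod (a n))^2 + 2 * (cmod (b n))^2"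
      using cmod_prod_le[of "complex_of_real (cmod (a n))" "complex_of_real (cmod (b n))"]
      by (simp add: power2_eq_square algebra_simps norm_mult)
    finally show ?thesis .
  qed
  then show "\<exists>N. \<forall>n\<ge>N. norm ((cmod (a n + b n))^2) \<le> 2 * (cmod (a n))^2 + 2 * (cmod (b n))^2"
    by auto
  show "summable (\<lambda>k. 2 * (cmod (a k))^2 + 2 * (cmod (b k))^2)"
    using assms by (intro summable_add summable_mult)
qed

typedef l2 = "{c::nat \<Rightarrow> complex. summable (\<lambda>k. (cmod (c k))^2)}"
  morphisms ev Abs_l2
  by (intro exI[of _ "\<lambda>_. 0"]) simp

setup_lifting type_definition_l2

lemma ev_sq_summable: "summable (\<lambda>k. (cmod (ev x k))^2)"
  using ev[of x] by simp

lemma l2_eqI: "(\<And>k. ev x k = ev y k) \<Longrightarrow> x = y"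
  by (metis ev_inject ext)

instantiation l2 :: complex_vector
begin
lift_definition zero_l2 :: l2 is "\<lambda>_. 0" by simp
lift_definition plus_l2 :: "l2 \<Rightarrow> l2 \<Rightarrow> l2" is "\<lambda>a b k. a k + b k"
  by (rule sq_summable_add)
lift_definition uminus_l2 :: "l2 \<Rightarrow> l2" is "\<lambda>a k. - a k" by simp
lift_definition minus_l2 :: "l2 \<Rightarrow> l2 \<Rightarrow> l2" is "\<lambda>a b k. a k - b k"
proof -
  fix a b :: "nat \<Rightarrow> complex"
  assume "summable (\<lambda>k. (cmod (a k))^2)" "summable (\<lambda>k. (cmod (b k))^2)"
  then have "summable (\<lambda>k. (cmod (a k + - b k))^2)" by (intro sq_summable_add) simp_all
  then show "summable (\<lambda>k. (cmod (a k - b k))^2)" by simp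
qed
lift_definition scaleR_l2 :: "real \<Rightarrow> l2 \<Rightarrow> l2" is "\<lambda>r a k. complex_of_real r * a k"
  by (simp add: norm_mult power_mult_distrib summable_mult)
lift_definition scaleC_l2 :: "complex \<Rightarrow> l2 \<Rightarrow> l2" is "\<lambda>r a k. r * a k"
  by (simp add: norm_mult power_mult_distrib summable_mult)
instance
  apply intro_classes
  apply (transfer; auto simp: algebra_simps)+
  done
end

lemma ev_zero[simp]: "ev 0 k = 0" by transfer simp
lemma ev_add[simp]: "ev (x + y) k = ev x k + ev y k" by transfer simp
lemma ev_minus[simp]: "ev (- x) k = - ev x k" by transfer simp
lemma ev_diff[simp]: "ev (x - y) k = ev x k - ev y k" by transfer simp
lemma ev_scaleC[simp]: "ev (scaleC c x) k = c * ev x k" by transfer simp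
lemma ev_sum: "ev (sum g A) k = (\<Sum>a\<in>A. ev (g a) k)"
  by (induct A rule: infinite_finite_induct) auto

definition ipl :: "l2 \<Rightarrow> l2 \<Rightarrow> complex" where
  "ipl x y = (\<Sum>k. ev x k * cnj (ev y k))"

lemma ipl_summable: "summable (\<lambda>k. ev x k * cnj (ev y k))"
  by (rule sq_summable_prod') (simp_all add: ev_sq_summable)

lemma ipl_self: "ipl x x = complex_of_real (\<Sum>k. (cmod (ev x k))^2)"
proof -
  have "(\<lambda>k. ev x k * cnj (ev x k)) = (\<lambda>k. complex_of_real ((cmod (ev x k))^2))"
    by (intro ext) (simp add: complex_norm_square[symmetric])
  moreover have "(\<lambda>k. complex_of_real ((cmod (ev x k))^2)) sums complex_of_real (\<Sum>k. (cmod (ev x k))^2)"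
    using ev_sq_summable[of x] by (intro sums_of_real_iff[THEN iffD2] summable_sums)
  ultimately show ?thesis
    unfolding ipl_def by (metis sums_unique)
qed

interpretation l2s: sesq ipl
proof
  fix x y z :: l2 and c :: complex
  show "ipl x y = cnj (ipl y x)"
  proof -
    have "(\<lambda>k. ev y k * cnj (ev x k)) sums ipl y x"
      unfolding ipl_def by (rule summable_sums[OF ipl_summable])
    then have "(\<lambda>k. cnj (ev y k * cnj (ev x k))) sums cnj (ipl y x)"
      by (simp only: sums_cnj)
    then have "(\<lambda>k. ev x k * cnj (ev y k)) sums cnj (ipl y x)"
      by (simp add: mult.commute)
    then show ?thesis unfolding ipl_def by (rule sums_unique[symmetric])
  qed
  show "ipl (x + y) z = ipl x z + ipl y z"
    unfolding ipl_def using ipl_summable[of x z] ipl_summable[of y z]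
    by (simp add: distrib_right suminf_add)
  show "ipl (scaleC c x) y = c * ipl x y"
    unfolding ipl_def using ipl_summable[of x y]
    by (simp add: mult.assoc suminf_mult)
  show "0 \<le> Re (ipl x x)"
    unfolding ipl_self using ev_sq_summable[of x] by (simp add: suminf_nonneg)
  show "ipl x x = 0 \<longleftrightarrow> x = 0"
  proof
    assume "ipl x x = 0"
    then have "(\<Sum>k. (cmod (ev x k))^2) = 0" unfolding ipl_self by simp
    then have "\<forall>k. (cmod (ev x k))^2 = 0"
      using suminf_eq_zero_iff[OF ev_sq_summable] by simp
    then show "x = 0" by (intro l2_eqI) simp
  next
    assume "x = 0" then show "ipl x x = 0" by (simp add: ipl_def)
  qed
qed

lemma nrm_l2_sq: "(l2s.nrm x)^2 = (\<Sum>k. (cmod (ev x k))^2)"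
  by (simp only: l2s.nrm_sq ipl_self Re_complex_of_real)




global_interpretation hs: sesq "cinner :: 'a::complex_inner \<Rightarrow> 'a \<Rightarrow> complex"
  apply unfold_locales
      apply (rule cinner_commute)
     apply (rule cinner_add_left)
    apply (rule cinner_scaleC_left)
   apply (rule cinner_self_Re_nonneg)
  apply (rule cinner_self_eq_zero)
  done

lemma hs_nrm: "hs.nrm x = norm x"
  by (simp add: hs.nrm_def norm_eq_sqrt_cinner)

lemma cmod_cinner_le: "cmod (cinner x y) \<le> norm x * norm y"
  using hs.cauchy_schwarz[of x y] by (simp add: hs_nrm)

lemma cinner_self_norm: "cinner x x = complex_of_real ((norm x)^2)"
  using hs.ip_self_nrm[of x] by (simp add: hs_nrm)

lemma cmod_cinner_commute: "cmod (cinner x y) = cmod (cinner y x)"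
  by (metis cinner_commute complex_mod_cnj)

lemma cinner_ext: "(\<And>y. cinner a y = cinner b y) \<Longrightarrow> a = b"
proof -
  assume h: "\<And>y. cinner a y = cinner b y"
  have "cinner (a - b) (a - b) = 0" using h[of "a - b"] by (simp add: hs.ip_diff_left)
  then have "a - b = 0" by (simp only: cinner_self_eq_zero)
  then show "a = b" by (rule right_minus_eq[THEN iffD1])
qed

lemma cinner_tendsto:
  assumes "X \<longlonglongrightarrow> L"
  shows "(\<lambda>n. cinner (X n) y) \<longlonglongrightarrow> cinner L y"
proof -
  have "(\<lambda>n. X n - L) \<longlonglongrightarrow> 0" using assms by (simp add: LIM_zero)
  then have "(\<lambda>n. norm (X n - L)) \<longlonglongrightarrow> 0" by (rule tendsto_norm_zero)
  then have t: "(\<lambda>n. norm (X n - L) * norm y) \<longlonglongrightarrow> 0 * norm y" by (rule tendsto_mult_right)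
  have b: "norm (cinner (X n) y - cinner L y) \<le> norm (X n - L) * norm y" for n
    using cmod_cinner_le[of "X n - L" y] by (simp only: hs.ip_diff_left)
  have e: "eventually (\<lambda>n. norm (cinner (X n) y - cinner L y) \<le> norm (X n - L) * norm y) sequentially"
    by (intro always_eventually allI b)
  have "(\<lambda>n. cinner (X n) y - cinner L y) \<longlonglongrightarrow> 0"
    by (rule Lim_null_comparison[OF e]) (use t in simp)
  then show ?thesis by (simp add: LIM_zero_iff)
qed

lemma finite_cs:
  fixes a b :: "'i \<Rightarrow> real"
  assumes "\<And>i. 0 \<le> a i" "\<And>i. 0 \<le> b i"
  shows "(\<Sum>i\<in>I. a i * b i) \<le> sqrt (\<Sum>i\<in>I. (a i)^2) * sqrt (\<Sum>i\<in>I. (b i)^2)"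
proof -
  have "(\<Sum>i\<in>I. a i * b i)^2 \<le> (\<Sum>i\<in>I. (a i)^2) * (\<Sum>i\<in>I. (b i)^2)"
    by (rule Cauchy_Schwarz_ineq_sum)
  then have "(\<Sum>i\<in>I. a i * b i) \<le> sqrt ((\<Sum>i\<in>I. (a i)^2) * (\<Sum>i\<in>I. (b i)^2))"
    by (rule real_le_rsqrt)
  then show ?thesis by (simp add: real_sqrt_mult)
qed




lemma nonneg_summable_on_iff_summable:
  fixes g :: "nat \<Rightarrow> real"
  assumes "\<And>n. 0 \<le> g n"
  shows "g summable_on UNIV \<longleftrightarrow> summable g"
  using summable_on_UNIV_nonneg_real_iff assms by blast

lemma infsum_eq_suminf_nonneg:
  fixes g :: "nat \<Rightarrow> real"
  assumes "summable g" "\<And>n. 0 \<le> g n"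
  shows "infsum g UNIV = suminf g"
proof -
  have "(g has_sum suminf g) UNIV"
    by (rule sums_nonneg_imp_has_sum[OF summable_sums[OF assms(1)] assms(2)])
  then show ?thesis by (rule infsumI)
qed

locale frm =
  fixes f :: "nat \<Rightarrow> 'a::{complex_inner, complete_space}"
  assumes fr: "frame f"
    and nontriv: "\<exists>x::'a. x \<noteq> 0"
begin

definition a :: "'a \<Rightarrow> nat \<Rightarrow> real" where "a x n = (cmod (cinner x (f n)))^2"

lemma a_nonneg: "0 \<le> a x n" by (simp add: a_def)

lemma frame_props: "\<exists>A B. 0 < A \<and> (\<forall>x. summable (a x) \<and> A * (norm x)^2 \<le> suminf (a x) \<and> suminf (a x) \<le> B * (norm x)^2)"
proof -
  obtain A B where AB: "0 < A" "\<And>x. (\<lambda>n. (cmod (cinner x (f n)))\<^sup>2) summable_on UNIV \<and>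
      A * (norm x)\<^sup>2 \<le> (\<Sum>\<^sub>\<infinity>n. (cmod (cinner x (f n)))\<^sup>2) \<and>
      (\<Sum>\<^sub>\<infinity>n. (cmod (cinner x (f n)))\<^sup>2) \<le> B * (norm x)\<^sup>2"
    using fr unfolding frame_def frame_on_def by blast
  have af: "a x = (\<lambda>n. (cmod (cinner x (f n)))^2)" for x by (simp add: a_def fun_eq_iff)
  have s: "summable (a x)" for x
  proof -
    have "a x summable_on UNIV" using AB(2)[of x] by (simp only: af)
    then show ?thesis using nonneg_summable_on_iff_summable[of "a x"] a_nonneg by blast
  qed
  have e: "infsum (a x) UNIV = suminf (a x)" for x
    by (rule infsum_eq_suminf_nonneg[OF s a_nonneg])
  have "A * (norm x)^2 \<le> suminf (a x) \<and> suminf (a x) \<le> B * (norm x)^2" for x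
    using AB(2)[of x] e[of x] by (simp only: af)
  then show ?thesis using AB(1) s by blast
qed

lemma a_summable: "summable (a x)" using frame_props by blast

lemma a_infsum: "infsum (a x) UNIV = suminf (a x)"
  by (rule infsum_eq_suminf_nonneg[OF a_summable a_nonneg])

definition Bo :: real where "Bo = opt_upper_bound f"

lemma Bo_set: "opt_upper_bound f = Inf {B. \<forall>x. suminf (a x) \<le> B * (norm x)^2}"
  unfolding opt_upper_bound_def using a_infsum by (simp add: a_def[abs_def])

lemma Bo_bound: "suminf (a x) \<le> Bo * (norm x)^2"
proof -
  obtain A B0 where AB: "0 < A" "\<And>x. A * (norm x)^2 \<le> suminf (a x)" "\<And>x. suminf (a x) \<le> B0 * (norm x)^2"
    using frame_props by blast
  obtain x0 :: 'a where x0: "x0 \<noteq> 0" using nontriv by blast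
  define S where "S = {B. \<forall>x. suminf (a x) \<le> B * (norm x)^2}"
  have ne: "S \<noteq> {}" using AB(3) unfolding S_def by blast
  have bdd: "bdd_below S"
  proof (rule bdd_belowI)
    fix B assume "B \<in> S"
    then have "suminf (a x0) \<le> B * (norm x0)^2" unfolding S_def by blast
    moreover have "0 \<le> suminf (a x0)" using a_summable a_nonneg by (simp add: suminf_nonneg)
    moreover have "(norm x0)^2 > 0" using x0 by simp
    ultimately show "0 \<le> B"
    proof -
      assume h: "suminf (a x0) \<le> B * (norm x0)^2" "0 \<le> suminf (a x0)" "0 < (norm x0)^2"
      show "0 \<le> B"
      proof (rule ccontr)
        assume "\<not> 0 \<le> B"
        then have "B * (norm x0)^2 < 0" using h(3) by (simp add: mult_neg_pos)
        then show False using h(1,2) by linarith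
      qed
    qed
  qed
  show ?thesis
  proof (cases "x = 0")
    case True
    then have "a x = (\<lambda>n. 0)" by (simp add: a_def[abs_def])
    then show ?thesis using True by simp
  next
    case False
    then have pos: "(norm x)^2 > 0" by simp
    have "suminf (a x) / (norm x)^2 \<le> Inf S"
    proof (rule cInf_greatest[OF ne])
      fix B assume "B \<in> S"
      then have "suminf (a x) \<le> B * (norm x)^2" unfolding S_def by blast
      then show "suminf (a x) / (norm x)^2 \<le> B" using pos by (simp add: divide_le_eq)
    qed
    then show ?thesis using pos unfolding Bo_def Bo_set S_def[symmetric] by (simp add: divide_le_eq)
  qed
qed

lemma Bo_pos: "0 < Bo"
proof -
  obtain A B0 where AB: "0 < A" "\<And>x. A * (norm x)^2 \<le> suminf (a x)"
    using frame_props by blast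
  obtain x0 :: 'a where x0: "x0 \<noteq> 0" using nontriv by blast
  have "A * (norm x0)^2 \<le> Bo * (norm x0)^2" using AB(2)[of x0] Bo_bound[of x0] by linarith
  then have "A \<le> Bo" using x0 by simp
  then show ?thesis using AB(1) by linarith
qed

lemma frame_lower: "\<exists>A>0. \<forall>x. A * (norm x)^2 \<le> suminf (a x)"
  using frame_props by blast

lemma a_l2: "summable (\<lambda>n. (cmod (cinner x (f n)))^2)"
  using a_summable[of x] by (simp add: a_def[abs_def])

lemma a_l2': "summable (\<lambda>n. (cmod (cinner (f n) x))^2)"
  using a_l2[of x] by (simp add: cmod_cinner_commute)

end




context frm begin

definition synth :: "l2 \<Rightarrow> 'a" where "synth c = (\<Sum>n. scaleC (ev c n) (f n))"

lemma fin_bound: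
  assumes "finite F"
  shows "(norm (\<Sum>n\<in>F. scaleC (c n) (f n)))^2 \<le> Bo * (\<Sum>n\<in>F. (cmod (c n))^2)"
proof -
  define z where "z = (\<Sum>n\<in>F. scaleC (c n) (f n))"
  define C where "C = (\<Sum>n\<in>F. (cmod (c n))^2)"
  have C0: "0 \<le> C" unfolding C_def by (simp add: sum_nonneg)
  have "cinner z z = (\<Sum>n\<in>F. c n * cinner (f n) z)"
    unfolding z_def[of] by (simp add: hs.ip_sum_left cinner_scaleC_left)
  then have "(norm z)^2 = cmod (\<Sum>n\<in>F. c n * cinner (f n) z)"
    using cinner_self_norm[of z] by (metis norm_of_real abs_of_nonneg zero_le_power2)
  also have "\<dots> \<le> (\<Sum>n\<in>F. cmod (c n) * cmod (cinner (f n) z))"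
    by (rule order_trans[OF norm_sum]) (simp add: norm_mult)
  also have "\<dots> \<le> sqrt C * sqrt (\<Sum>n\<in>F. (cmod (cinner (f n) z))^2)"
    unfolding C_def by (rule finite_cs) auto
  also have "(\<Sum>n\<in>F. (cmod (cinner (f n) z))^2) \<le> Bo * (norm z)^2"
  proof -
    have "(\<Sum>n\<in>F. (cmod (cinner (f n) z))^2) = (\<Sum>n\<in>F. a z n)"
      by (simp add: a_def cmod_cinner_commute)
    also have "\<dots> \<le> suminf (a z)"
      using a_summable assms by (intro sum_le_suminf) (auto simp: a_nonneg)
    also have "\<dots> \<le> Bo * (norm z)^2" by (rule Bo_bound)
    finally show ?thesis .
  qed
  then have "sqrt C * sqrt (\<Sum>n\<in>F. (cmod (cinner (f n) z))^2) \<le> sqrt C * sqrt (Bo * (norm z)^2)"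
    using C0 by (intro mult_left_mono real_sqrt_le_mono) auto
  also have "\<dots> = sqrt (C * Bo) * norm z"
    using Bo_pos by (simp add: real_sqrt_mult)
  finally have h: "(norm z)^2 \<le> sqrt (C * Bo) * norm z" .
  have "norm z \<le> sqrt (C * Bo)"
  proof (cases "norm z = 0")
    case True then show ?thesis using C0 Bo_pos by simp
  next
    case False
    then have "norm z > 0" by simp
    with h show ?thesis by (simp add: power2_eq_square)
  qed
  then have "(norm z)^2 \<le> (sqrt (C * Bo))^2" by (simp add: power_mono)
  also have "\<dots> = C * Bo" using C0 Bo_pos by simp
  finally show ?thesis unfolding z_def C_def by (simp add: mult.commute)
qed

lemma synth_summable: "summable (\<lambda>n. scaleC (ev c n) (f n))"
proof -
  define g where "g = (\<lambda>n. scaleC (ev c n) (f n))"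
  define S where "S = (\<lambda>N. \<Sum>n<N. g n)"
  have key: "\<exists>M. \<forall>m\<ge>M. \<forall>n\<ge>M. n \<le> m \<longrightarrow> norm (S m - S n) < e" if e: "0 < e" for e
  proof -
    have "summable (\<lambda>k. (cmod (ev c k))^2)" by (rule ev_sq_summable)
    then obtain N where N: "\<And>m n. m \<ge> N \<Longrightarrow> norm (\<Sum>k\<in>{m..<n}. (cmod (ev c k))^2) < e^2 / Bo"
      unfolding summable_Cauchy using e Bo_pos by (metis divide_pos_pos zero_less_power)
    show ?thesis
    proof (intro exI allI impI)
      fix m n assume mn: "N \<le> m" "N \<le> n" "n \<le> m"
      have Sd: "S m - S n = (\<Sum>k\<in>{n..<m}. g k)"
        unfolding S_def using mn(3) by (metis lessThan_atLeast0 sum_diff_nat_ivl zero_le)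
      have h: "(\<Sum>k\<in>{n..<m}. (cmod (ev c k))^2) < e^2 / Bo"
        using N[of n m] mn by (simp add: sum_nonneg)
      have "(norm (\<Sum>k\<in>{n..<m}. g k))^2 \<le> Bo * (\<Sum>k\<in>{n..<m}. (cmod (ev c k))^2)"
        unfolding g_def by (rule fin_bound) simp
      also have "\<dots> < Bo * (e^2 / Bo)" using h Bo_pos by (intro mult_strict_left_mono)
      also have "\<dots> = e^2" using Bo_pos by simp
      finally have "(norm (\<Sum>k\<in>{n..<m}. g k))^2 < e^2" .
      then have "norm (\<Sum>k\<in>{n..<m}. g k) < e"
        using e by (simp add: power2_less_imp_less)
      then show "norm (S m - S n) < e" using Sd by simp
    qed
  qed
  have "Cauchy S"
  proof (rule CauchyI)
    fix e :: real assume "0 < e"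
    then obtain M where M: "\<And>m n. M \<le> m \<Longrightarrow> M \<le> n \<Longrightarrow> n \<le> m \<Longrightarrow> norm (S m - S n) < e"
      using key by blast
    show "\<exists>M. \<forall>m\<ge>M. \<forall>n\<ge>M. norm (S m - S n) < e"
    proof (intro exI allI impI)
      fix m n assume "M \<le> m" "M \<le> n"
      then show "norm (S m - S n) < e"
        using M[of m n] M[of n m] by (metis le_cases norm_minus_commute)
    qed
  qed
  then have "convergent S" by (rule Cauchy_convergent)
  then show ?thesis unfolding summable_iff_convergent S_def g_def .
qed

lemma synth_sums: "(\<lambda>n. scaleC (ev c n) (f n)) sums synth c"
  unfolding synth_def by (rule summable_sums[OF synth_summable])

lemma cinner_synth_sums: "(\<lambda>n. ev c n * cinner (f n) y) sums cinner (synth c) y"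
proof -
  have "(\<lambda>N. \<Sum>n<N. scaleC (ev c n) (f n)) \<longlonglongrightarrow> synth c"
    using synth_sums unfolding sums_def .
  then have "(\<lambda>N. cinner (\<Sum>n<N. scaleC (ev c n) (f n)) y) \<longlonglongrightarrow> cinner (synth c) y"
    by (rule cinner_tendsto)
  then show ?thesis
    unfolding sums_def by (simp add: hs.ip_sum_left cinner_scaleC_left)
qed

lemma cinner_synth: "cinner (synth c) y = (\<Sum>n. ev c n * cinner (f n) y)"
  using cinner_synth_sums by (metis sums_unique)

lemma synth_norm_sq: "(norm (synth c))^2 \<le> Bo * (l2s.nrm c)^2"
proof -
  have lim: "(\<lambda>N. norm (\<Sum>n<N. scaleC (ev c n) (f n))) \<longlonglongrightarrow> norm (synth c)"
    using synth_sums unfolding sums_def by (rule tendsto_norm)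
  have "norm (\<Sum>n<N. scaleC (ev c n) (f n)) \<le> sqrt (Bo * (l2s.nrm c)^2)" for N
  proof -
    have "(norm (\<Sum>n<N. scaleC (ev c n) (f n)))^2 \<le> Bo * (\<Sum>n<N. (cmod (ev c n))^2)"
      by (rule fin_bound) simp
    also have "\<dots> \<le> Bo * (l2s.nrm c)^2"
      unfolding nrm_l2_sq using Bo_pos ev_sq_summable[of c]
      by (intro mult_left_mono sum_le_suminf) auto
    finally show ?thesis by (simp add: real_le_rsqrt)
  qed
  then have "norm (synth c) \<le> sqrt (Bo * (l2s.nrm c)^2)"
    by (intro tendsto_le[OF _ tendsto_const lim]) auto
  then have "(norm (synth c))^2 \<le> (sqrt (Bo * (l2s.nrm c)^2))^2" by (simp add: power_mono)
  also have "\<dots> = Bo * (l2s.nrm c)^2" using Bo_pos by simp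
  finally show ?thesis .
qed

lemma synth_add: "synth (x + y) = synth x + synth y"
proof (rule cinner_ext)
  fix z
  have "(\<lambda>n. ev (x + y) n * cinner (f n) z) sums (cinner (synth x) z + cinner (synth y) z)"
    using sums_add[OF cinner_synth_sums[of x z] cinner_synth_sums[of y z]] by (simp add: distrib_right)
  then show "cinner (synth (x + y)) z = cinner (synth x + synth y) z"
    using cinner_synth_sums[of "x+y" z] by (simp add: cinner_add_left sums_unique2)
qed

lemma synth_scaleC: "synth (scaleC r x) = scaleC r (synth x)"
proof (rule cinner_ext)
  fix z
  have "(\<lambda>n. ev (scaleC r x) n * cinner (f n) z) sums (r * cinner (synth x) z)"
    using sums_mult[OF cinner_synth_sums[of x z], of r] by (simp add: mult.assoc)
  then show "cinner (synth (scaleC r x)) z = cinner (scaleC r (synth x)) z"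
    using cinner_synth_sums[of "scaleC r x" z] by (simp add: cinner_scaleC_left sums_unique2)
qed

lemma synth_zero: "synth 0 = 0"
  using synth_scaleC[of 0 0] by (metis cvs.scale_zero_left)

lemma synth_diff: "synth (x - y) = synth x - synth y"
  by (metis add_diff_cancel_right' diff_add_cancel synth_add)

lemma synth_sum: "synth (sum g A) = (\<Sum>i\<in>A. synth (g i))"
  by (induct A rule: infinite_finite_induct) (auto simp: synth_add synth_zero)

lemma synth_span:
  assumes "\<And>x. x \<in> S \<Longrightarrow> synth x \<in> T" "cvs.subspace T" "y \<in> cvs.span S"
  shows "synth y \<in> T"
  using assms(3)
proof (induct rule: cvs.span_induct_alt)
  case base then show ?case using synth_zero cvs.subspace_0[OF assms(2)] by simp
next
  case (step c x y)
  then show ?case using assms(1,2)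
    by (simp add: synth_add synth_scaleC cvs.subspace_add cvs.subspace_scale)
qed

definition coef :: "'a \<Rightarrow> l2" where "coef x = Abs_l2 (\<lambda>n. cinner x (f n))"

lemma ev_coef: "ev (coef x) = (\<lambda>n. cinner x (f n))"
  unfolding coef_def using a_l2[of x] by (simp add: Abs_l2_inverse)

lemma frame_op_synth: "frame_op f x = synth (coef x)"
  unfolding frame_op_def synth_def ev_coef ..

end




lemma summable_delta: "summable (\<lambda>k. (cmod (if k = n then (1::complex) else 0))^2)"
proof -
  have "(\<lambda>k. if k = n then (\<lambda>_. 1::real) k else 0) sums 1" by (rule sums_single)
  moreover have "(\<lambda>k. (cmod (if k = n then (1::complex) else 0))^2) = (\<lambda>k. if k = n then (\<lambda>_. 1::real) k else 0)"
    by auto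
  ultimately show ?thesis by (metis sums_summable)
qed

lemma sq_sub_le: "(cmod (x - y))^2 \<le> 2 * (cmod x)^2 + 2 * (cmod y)^2"
proof -
  have "cmod (x - y) \<le> cmod x + cmod y" by (rule norm_triangle_ineq4)
  then have "(cmod (x - y))^2 \<le> (cmod x + cmod y)^2" by (simp add: power_mono)
  also have "\<dots> \<le> 2 * (cmod x)^2 + 2 * (cmod y)^2"
    using cmod_prod_le[of "complex_of_real (cmod x)" "complex_of_real (cmod y)"]
    by (simp add: power2_eq_square algebra_simps norm_mult)
  finally show ?thesis .
qed

context frm begin

definition dv :: "nat \<Rightarrow> nat \<Rightarrow> complex" where
  "dv n k = (if k = n then 1 else 0) - cinner (f n) (f k) / complex_of_real Bo"

lemma dv_l2: "summable (\<lambda>k. (cmod (dv n k))^2)"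
proof -
  have "summable (\<lambda>k. (cmod (- (cinner (f n) (f k) / complex_of_real Bo)))^2)"
    using summable_divide[OF a_l2[of "f n"], of "Bo^2"]
    by (simp add: norm_divide power_divide a_def)
  then have "summable (\<lambda>k. (cmod ((if k = n then 1 else 0) + - (cinner (f n) (f k) / complex_of_real Bo)))^2)"
    by (intro sq_summable_add summable_delta)
  then show ?thesis by (simp add: dv_def)
qed

definition d :: "nat \<Rightarrow> l2" where "d n = Abs_l2 (dv n)"

lemma ev_d: "ev (d n) = dv n"
  unfolding d_def using dv_l2[of n] by (simp add: Abs_l2_inverse)

lemma frame_op_sums: "(\<lambda>k. cinner x (f k) * cinner (f k) y) sums cinner (frame_op f x) y"
  using cinner_synth_sums[of "coef x" y] unfolding frame_op_synth ev_coef .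

lemma synth_d: "synth (d n) = scaleC (1 / complex_of_real Bo) (scaleR Bo (f n) - frame_op f (f n))"
proof (rule cinner_ext)
  fix y
  have s1: "(\<lambda>k. (if k = n then cinner (f k) y else 0)) sums cinner (f n) y"
    by (rule sums_single)
  have s2: "(\<lambda>k. cinner (f n) (f k) * cinner (f k) y / complex_of_real Bo) sums (cinner (frame_op f (f n)) y / complex_of_real Bo)"
    by (rule sums_divide[OF frame_op_sums])
  have "(\<lambda>k. (if k = n then cinner (f k) y else 0) - cinner (f n) (f k) * cinner (f k) y / complex_of_real Bo)
     sums (cinner (f n) y - cinner (frame_op f (f n)) y / complex_of_real Bo)"
    by (rule sums_diff[OF s1 s2])
  moreover have "(\<lambda>k. (if k = n then cinner (f k) y else 0) - cinner (f n) (f k) * cinner (f k) y / complex_of_real Bo)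
     = (\<lambda>k. ev (d n) k * cinner (f k) y)"
    by (auto simp: ev_d dv_def field_simps)
  ultimately have "cinner (synth (d n)) y = cinner (f n) y - cinner (frame_op f (f n)) y / complex_of_real Bo"
    using cinner_synth_sums[of "d n" y] by (metis sums_unique2)
  also have "\<dots> = cinner (scaleC (1 / complex_of_real Bo) (scaleR Bo (f n) - frame_op f (f n))) y"
    using Bo_pos by (simp add: cinner_scaleC_left hs.ip_diff_left scaleC_of_real[symmetric] field_simps)
  finally show "cinner (synth (d n)) y = cinner (scaleC (1 / complex_of_real Bo) (scaleR Bo (f n) - frame_op f (f n))) y" .
qed

lemma ipl_d: "ipl (d n) u = cnj (ev u n) - cnj (cinner (synth u) (f n)) / complex_of_real Bo"
proof -
  have s1: "(\<lambda>k. (if k = n then cnj (ev u k) else 0)) sums cnj (ev u n)"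
    by (rule sums_single)
  have "(\<lambda>k. cnj (ev u k * cinner (f k) (f n))) sums cnj (cinner (synth u) (f n))"
    using cinner_synth_sums[of u "f n"] by (simp only: sums_cnj)
  then have s2: "(\<lambda>k. cnj (ev u k * cinner (f k) (f n)) / complex_of_real Bo) sums (cnj (cinner (synth u) (f n)) / complex_of_real Bo)"
    by (rule sums_divide)
  have "(\<lambda>k. (if k = n then cnj (ev u k) else 0) - cnj (ev u k * cinner (f k) (f n)) / complex_of_real Bo)
    sums (cnj (ev u n) - cnj (cinner (synth u) (f n)) / complex_of_real Bo)"
    by (rule sums_diff[OF s1 s2])
  moreover have "(\<lambda>k. (if k = n then cnj (ev u k) else 0) - cnj (ev u k * cinner (f k) (f n)) / complex_of_real Bo)
     = (\<lambda>k. ev (d n) k * cnj (ev u k))"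
  proof
    fix k
    have "cnj (cinner (f k) (f n)) = cinner (f n) (f k)" by (metis cinner_commute)
    then show "(if k = n then cnj (ev u k) else 0) - cnj (ev u k * cinner (f k) (f n)) / complex_of_real Bo
       = ev (d n) k * cnj (ev u k)"
      by (auto simp: ev_d dv_def field_simps)
  qed
  ultimately show ?thesis unfolding ipl_def by (metis sums_unique)
qed

lemma ev_sq_le_nrm:
  assumes "finite I"
  shows "(\<Sum>n\<in>I. (cmod (ev u n))^2) \<le> (l2s.nrm u)^2"
  unfolding nrm_l2_sq using ev_sq_summable[of u] assms by (intro sum_le_suminf) auto

lemma ipl_d_bound:
  assumes "finite I"
  shows "(\<Sum>n\<in>I. (cmod (ipl (d n) u))^2) \<le> 4 * (l2s.nrm u)^2"
proof -
  have "(\<Sum>n\<in>I. (cmod (ipl (d n) u))^2)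
      \<le> (\<Sum>n\<in>I. 2 * (cmod (ev u n))^2 + 2 * (cmod (cinner (synth u) (f n)))^2 / Bo^2)"
  proof (rule sum_mono)
    fix n
    have "(cmod (ipl (d n) u))^2 \<le> 2 * (cmod (cnj (ev u n)))^2 + 2 * (cmod (cnj (cinner (synth u) (f n)) / complex_of_real Bo))^2"
      unfolding ipl_d by (rule sq_sub_le)
    then show "(cmod (ipl (d n) u))^2 \<le> 2 * (cmod (ev u n))^2 + 2 * (cmod (cinner (synth u) (f n)))^2 / Bo^2"
      using Bo_pos by (simp add: norm_divide power_divide)
  qed
  also have "\<dots> = 2 * (\<Sum>n\<in>I. (cmod (ev u n))^2) + 2 * (\<Sum>n\<in>I. a (synth u) n) / Bo^2"
    by (simp add: sum.distrib sum_distrib_left sum_divide_distrib a_def)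
  also have "\<dots> \<le> 2 * (l2s.nrm u)^2 + 2 * (Bo * (Bo * (l2s.nrm u)^2)) / Bo^2"
  proof -
    have "(\<Sum>n\<in>I. a (synth u) n) \<le> suminf (a (synth u))"
      using a_summable assms by (intro sum_le_suminf) (auto simp: a_nonneg)
    also have "\<dots> \<le> Bo * (norm (synth u))^2" by (rule Bo_bound)
    also have "\<dots> \<le> Bo * (Bo * (l2s.nrm u)^2)"
      using Bo_pos synth_norm_sq[of u] by (intro mult_left_mono) auto
    finally have "(\<Sum>n\<in>I. a (synth u) n) \<le> Bo * (Bo * (l2s.nrm u)^2)" .
    then show ?thesis using ev_sq_le_nrm[OF assms, of u] Bo_pos
      by (intro add_mono mult_left_mono divide_right_mono) auto
  qed
  also have "\<dots> = 4 * (l2s.nrm u)^2" using Bo_pos by (simp add: power2_eq_square)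
  finally show ?thesis .
qed

lemma ev_d_diag: "ev (d n) n = complex_of_real (1 - (norm (f n))^2 / Bo)"
  by (simp add: ev_d dv_def cinner_self_norm)

lemma trace_bound:
  assumes I: "finite I" and U: "finite U" "l2s.orthonormal U"
    and sp: "\<And>n. n \<in> I \<Longrightarrow> d n \<in> cvs.span U"
  shows "(\<Sum>n\<in>I. (1 - (norm (f n))^2 / Bo)) \<le> 2 * real (card U)"
proof -
  have exp: "ev (d n) n = (\<Sum>u\<in>U. ipl (d n) u * ev u n)" if "n \<in> I" for n
  proof -
    have eq: "d n = (\<Sum>u\<in>U. scaleC (ipl (d n) u) u)"
      by (rule l2s.onb_expand[OF U sp[OF that]])
    have "ev (d n) n = ev (\<Sum>u\<in>U. scaleC (ipl (d n) u) u) n"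
      by (rule arg_cong[where f="\<lambda>x. ev x n", OF eq])
    also have "\<dots> = (\<Sum>u\<in>U. ipl (d n) u * ev u n)" by (simp only: ev_sum ev_scaleC)
    finally show ?thesis .
  qed
  have unit: "(l2s.nrm u)^2 = 1" if "u \<in> U" for u
    using U(2) that l2s.nrm_sq[of u] unfolding l2s.orthonormal_def by auto
  have "(\<Sum>n\<in>I. (1 - (norm (f n))^2 / Bo)) = Re (\<Sum>n\<in>I. ev (d n) n)"
    by (simp add: ev_d_diag)
  also have "\<dots> \<le> cmod (\<Sum>n\<in>I. ev (d n) n)" by (rule complex_Re_le_cmod)
  also have "(\<Sum>n\<in>I. ev (d n) n) = (\<Sum>u\<in>U. \<Sum>n\<in>I. ipl (d n) u * ev u n)"
    using exp by (simp add: sum.swap[of _ U I])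
  also have "cmod \<dots> \<le> (\<Sum>u\<in>U. \<Sum>n\<in>I. cmod (ipl (d n) u) * cmod (ev u n))"
    by (rule order_trans[OF norm_sum sum_mono]) (rule order_trans[OF norm_sum], simp add: norm_mult)
  also have "\<dots> \<le> (\<Sum>u\<in>U. \<Sum>n\<in>I. ((cmod (ipl (d n) u))^2 / 4 + (cmod (ev u n))^2))"
  proof (intro sum_mono)
    fix u n
    have "0 \<le> (cmod (ipl (d n) u) - 2 * cmod (ev u n))^2" by simp
    then show "cmod (ipl (d n) u) * cmod (ev u n) \<le> (cmod (ipl (d n) u))^2 / 4 + (cmod (ev u n))^2"
      by (simp add: power2_eq_square algebra_simps)
  qed
  also have "\<dots> = (\<Sum>u\<in>U. (\<Sum>n\<in>I. (cmod (ipl (d n) u))^2) / 4 + (\<Sum>n\<in>I. (cmod (ev u n))^2))"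
    by (simp add: sum.distrib sum_divide_distrib)
  also have "\<dots> \<le> (\<Sum>u\<in>U. 2)"
  proof (rule sum_mono)
    fix u assume "u \<in> U"
    then show "(\<Sum>n\<in>I. (cmod (ipl (d n) u))^2) / 4 + (\<Sum>n\<in>I. (cmod (ev u n))^2) \<le> 2"
      using ipl_d_bound[OF I, of u] ev_sq_le_nrm[OF I, of u] unit by auto
  qed
  also have "\<dots> = 2 * real (card U)" by simp
  finally show ?thesis .
qed

end




lemma coord:
  assumes "finite V"
    and "\<forall>i\<in>V. \<forall>j\<in>V. ipl (y i) (\<phi> j) = (if i = j then 1 else 0)"
  shows "\<exists>K. finite K \<and> card K = card V \<and>
           (\<forall>k\<in>K. \<exists>w \<in> cvs.span (y ` V). \<forall>l\<in>K. ev w l = (if l = k then 1 else 0))"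
  using assms
proof (induct V rule: finite_induct)
  case empty
  then show ?case by (intro exI[of _ "{}"]) simp
next
  case (insert i V)
  have biV: "\<forall>i\<in>V. \<forall>j\<in>V. ipl (y i) (\<phi> j) = (if i = j then 1 else 0)"
    using insert.prems by blast
  obtain K where K: "finite K" "card K = card V"
    "\<forall>k\<in>K. \<exists>w \<in> cvs.span (y ` V). \<forall>l\<in>K. ev w l = (if l = k then 1 else 0)"
    using insert.hyps(3)[OF biV] by blast
  obtain W where W: "\<And>k. k \<in> K \<Longrightarrow> W k \<in> cvs.span (y ` V)"
    "\<And>k l. k \<in> K \<Longrightarrow> l \<in> K \<Longrightarrow> ev (W k) l = (if l = k then 1 else 0)"
    using K(3) by metis
  define u where "u = y i - (\<Sum>k\<in>K. scaleC (ev (y i) k) (W k))"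
  have Wperp: "ipl (W k) (\<phi> i) = 0" if "k \<in> K" for k
  proof (rule l2s.ip_span_zero[OF _ W(1)[OF that]])
    fix s assume "s \<in> y ` V"
    then obtain j where "j \<in> V" "s = y j" by blast
    then show "ipl s (\<phi> i) = 0" using insert.prems insert.hyps(2) by auto
  qed
  have "ipl u (\<phi> i) = ipl (y i) (\<phi> i) - (\<Sum>k\<in>K. ev (y i) k * ipl (W k) (\<phi> i))"
    unfolding u_def by (simp add: l2s.ip_diff_left l2s.ip_sum_left l2s.ip_scaleC_left)
  also have "\<dots> = 1" using Wperp insert.prems by simp
  finally have u1: "ipl u (\<phi> i) = 1" .
  have "u \<noteq> 0" using u1 by auto
  then obtain k0 where k0: "ev u k0 \<noteq> 0" using l2_eqI[of u 0] by auto
  have uK: "ev u k = 0" if "k \<in> K" for k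
  proof -
    have "ev u k = ev (y i) k - (\<Sum>k'\<in>K. ev (y i) k' * ev (W k') k)"
      unfolding u_def by (simp add: ev_sum)
    also have "(\<Sum>k'\<in>K. ev (y i) k' * ev (W k') k) = (\<Sum>k'\<in>K. if k' = k then ev (y i) k' else 0)"
      using W(2) that by (intro sum.cong) auto
    also have "\<dots> = ev (y i) k" using K(1) that by (simp add: sum.delta)
    finally show ?thesis by simp
  qed
  have k0K: "k0 \<notin> K" using uK k0 by blast
  define w0 where "w0 = scaleC (1 / ev u k0) u"
  have w0k0: "ev w0 k0 = 1" using k0 by (simp add: w0_def)
  have w0K: "ev w0 l = 0" if "l \<in> K" for l using uK[OF that] by (simp add: w0_def)
  define W' where "W' k = (if k = k0 then w0 else W k - scaleC (ev (W k) k0) w0)" for k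
  have spmono: "cvs.span (y ` V) \<subseteq> cvs.span (y ` insert i V)"
    by (rule cvs.span_mono) auto
  have yi: "y i \<in> cvs.span (y ` insert i V)" by (rule cvs.span_base) simp
  have usp: "u \<in> cvs.span (y ` insert i V)"
    unfolding u_def
    by (rule cvs.span_diff[OF yi], rule cvs.span_sum, rule cvs.span_scale)
       (use W(1) spmono in blast)
  have w0sp: "w0 \<in> cvs.span (y ` insert i V)" unfolding w0_def by (rule cvs.span_scale[OF usp])
  show ?case
  proof (intro exI conjI ballI)
    show "finite (insert k0 K)" using K(1) by simp
    show "card (insert k0 K) = card (insert i V)"
      using K(1,2) k0K insert.hyps(1,2) by simp
    fix k assume kK: "k \<in> insert k0 K"
    show "\<exists>w \<in> cvs.span (y ` insert i V). \<forall>l\<in>insert k0 K. ev w l = (if l = k then 1 else 0)"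
    proof (intro bexI ballI)
      show "W' k \<in> cvs.span (y ` insert i V)"
      proof (cases "k = k0")
        case True then show ?thesis using w0sp by (simp add: W'_def)
      next
        case False
        then have "k \<in> K" using kK by simp
        then have "W k \<in> cvs.span (y ` insert i V)" using W(1) spmono by blast
        then show ?thesis using False w0sp by (simp add: W'_def cvs.span_diff cvs.span_scale)
      qed
      fix l assume lK: "l \<in> insert k0 K"
      show "ev (W' k) l = (if l = k then 1 else 0)"
      proof (cases "k = k0")
        case True
        then show ?thesis using lK w0k0 w0K k0K by (auto simp: W'_def)
      next
        case False
        then have kK': "k \<in> K" using kK by simp
        show ?thesis
        proof (cases "l = k0")
          case True
          then show ?thesis using False w0k0 by (simp add: W'_def)
        next
          case lf: False
          then have "l \<in> K" using lK by simp
          then show ?thesis using False W(2)[OF kK'] w0K by (simp add: W'_def)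
        qed
      qed
    qed
  qed
qed




lemma sq_summable_restrict:
  assumes "summable (\<lambda>l. (cmod (g l))^2)"
  shows "summable (\<lambda>l. (cmod (if l \<in> K then 0 else g l))^2)"
  by (rule summable_comparison_test[OF _ assms]) (auto intro!: exI[of _ 0])

lemma ev_Abs_l2:
  assumes "summable (\<lambda>l. (cmod (g l))^2)"
  shows "ev (Abs_l2 g) = g"
  using assms by (simp add: Abs_l2_inverse)

context frm begin

lemma restricted_sum:
  assumes "finite K"
  shows "summable (\<lambda>n. if n \<in> K then 0 else a x n)"
    and "suminf (a x) = (\<Sum>n. if n \<in> K then 0 else a x n) + (\<Sum>k\<in>K. a x k)"
proof -
  have s1: "(\<lambda>n. if n \<in> K then a x n else 0) sums (\<Sum>k\<in>K. a x k)"
    by (rule sums_If_finite_set[OF assms])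
  have s0: "a x sums suminf (a x)" by (rule summable_sums[OF a_summable])
  have "(\<lambda>n. a x n - (if n \<in> K then a x n else 0)) sums (suminf (a x) - (\<Sum>k\<in>K. a x k))"
    by (rule sums_diff[OF s0 s1])
  moreover have "(\<lambda>n. a x n - (if n \<in> K then a x n else 0)) = (\<lambda>n. if n \<in> K then 0 else a x n)"
    by auto
  ultimately have s: "(\<lambda>n. if n \<in> K then 0 else a x n) sums (suminf (a x) - (\<Sum>k\<in>K. a x k))"
    by simp
  then show "summable (\<lambda>n. if n \<in> K then 0 else a x n)" by (rule sums_summable)
  from s show "suminf (a x) = (\<Sum>n. if n \<in> K then 0 else a x n) + (\<Sum>k\<in>K. a x k)"
    by (simp add: sums_iff)
qed

lemma delete_one:
  assumes K: "finite K" and k: "k \<in> K" and w: "synth w = 0" "\<forall>l\<in>K. ev w l = (if l = k then 1 else 0)"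
  shows "a x k \<le> (l2s.nrm (Abs_l2 (\<lambda>l. if l \<in> K then 0 else ev w l)))^2 * (\<Sum>n. if n \<in> K then 0 else a x n)"
proof -
  define wr where "wr = Abs_l2 (\<lambda>l. if l \<in> K then 0 else ev w l)"
  define b where "b = Abs_l2 (\<lambda>l. if l \<in> K then 0 else cinner x (f l))"
  have evwr: "ev wr = (\<lambda>l. if l \<in> K then 0 else ev w l)"
    unfolding wr_def by (rule ev_Abs_l2[OF sq_summable_restrict[OF ev_sq_summable]])
  have evb: "ev b = (\<lambda>l. if l \<in> K then 0 else cinner x (f l))"
    unfolding b_def by (rule ev_Abs_l2[OF sq_summable_restrict[OF a_l2]])
  have s0: "(\<lambda>l. ev w l * cinner (f l) x) sums 0"
    using cinner_synth_sums[of w x] w(1) by simp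
  have s1: "(\<lambda>l. if l = k then cinner (f l) x else 0) sums cinner (f k) x" by (rule sums_single)
  have "(\<lambda>l. ev w l * cinner (f l) x - (if l = k then cinner (f l) x else 0)) sums (0 - cinner (f k) x)"
    by (rule sums_diff[OF s0 s1])
  moreover have "(\<lambda>l. ev w l * cinner (f l) x - (if l = k then cinner (f l) x else 0))
      = (\<lambda>l. ev wr l * cnj (ev b l))"
  proof
    fix l
    show "ev w l * cinner (f l) x - (if l = k then cinner (f l) x else 0) = ev wr l * cnj (ev b l)"
    proof (cases "l \<in> K")
      case True then show ?thesis using w(2) by (auto simp: evwr evb)
    next
      case False
      then have "l \<noteq> k" using k by auto
      moreover have "cnj (cinner x (f l)) = cinner (f l) x" by (metis cinner_commute)
      ultimately show ?thesis using False by (simp add: evwr evb)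
    qed
  qed
  ultimately have "ipl wr b = - cinner (f k) x" unfolding ipl_def by (simp add: sums_iff)
  then have "cmod (cinner (f k) x) \<le> l2s.nrm wr * l2s.nrm b"
    using l2s.cauchy_schwarz[of wr b] by simp
  then have "(cmod (cinner (f k) x))^2 \<le> (l2s.nrm wr * l2s.nrm b)^2"
    by (simp add: power_mono)
  also have "\<dots> = (l2s.nrm wr)^2 * (l2s.nrm b)^2" by (simp add: power_mult_distrib)
  also have "(l2s.nrm b)^2 = (\<Sum>n. if n \<in> K then 0 else a x n)"
    unfolding nrm_l2_sq evb by (rule arg_cong[where f=suminf]) (auto simp: a_def)
  finally show ?thesis unfolding wr_def a_def by (simp add: cmod_cinner_commute)
qed

lemma delete:
  assumes K: "finite K"
    and w: "\<And>k. k \<in> K \<Longrightarrow> \<exists>w. synth w = 0 \<and> (\<forall>l\<in>K. ev w l = (if l = k then 1 else 0))"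
  shows "frame_on (-K) f"
proof -
  obtain W where W: "\<And>k. k \<in> K \<Longrightarrow> synth (W k) = 0"
    "\<And>k. k \<in> K \<Longrightarrow> \<forall>l\<in>K. ev (W k) l = (if l = k then 1 else 0)"
    using w by metis
  define C where "C = (\<Sum>k\<in>K. (l2s.nrm (Abs_l2 (\<lambda>l. if l \<in> K then 0 else ev (W k) l)))^2)"
  have C0: "0 \<le> C" unfolding C_def by (simp add: sum_nonneg)
  define T where "T x = (\<Sum>n. if n \<in> K then 0 else a x n)" for x
  have T0: "0 \<le> T x" for x
    unfolding T_def by (rule suminf_nonneg[OF restricted_sum(1)[OF K]]) (simp add: a_nonneg)
  obtain A0 where A0: "A0 > 0" "\<And>x. A0 * (norm x)^2 \<le> suminf (a x)"
    using frame_lower by blast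
  have low: "A0 / (1 + C) * (norm x)^2 \<le> T x" for x
  proof -
    have "suminf (a x) = T x + (\<Sum>k\<in>K. a x k)"
      unfolding T_def by (rule restricted_sum(2)[OF K])
    also have "(\<Sum>k\<in>K. a x k) \<le> (\<Sum>k\<in>K. (l2s.nrm (Abs_l2 (\<lambda>l. if l \<in> K then 0 else ev (W k) l)))^2 * T x)"
      unfolding T_def using W by (intro sum_mono delete_one[OF K]) auto
    also have "\<dots> = C * T x" unfolding C_def by (simp add: sum_distrib_right)
    finally have "suminf (a x) \<le> (1 + C) * T x" by (simp add: algebra_simps)
    then have "A0 * (norm x)^2 \<le> (1 + C) * T x" using A0(2)[of x] by linarith
    then show ?thesis using C0 by (simp add: field_simps)
  qed
  have up: "T x \<le> Bo * (norm x)^2" for x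
  proof -
    have "T x \<le> T x + (\<Sum>k\<in>K. a x k)" by (simp add: sum_nonneg a_nonneg)
    also have "\<dots> = suminf (a x)" unfolding T_def by (rule restricted_sum(2)[OF K, symmetric])
    also have "\<dots> \<le> Bo * (norm x)^2" by (rule Bo_bound)
    finally show ?thesis .
  qed
  have conv: "(\<lambda>n. (cmod (cinner x (f n)))^2) summable_on (-K) \<and>
      infsum (\<lambda>n. (cmod (cinner x (f n)))^2) (-K) = T x" for x
  proof -
    have s: "summable (\<lambda>n. if n \<in> K then 0 else a x n)" by (rule restricted_sum(1)[OF K])
    have nn: "\<And>n. 0 \<le> (if n \<in> K then 0 else a x n)" by (simp add: a_nonneg)
    have su: "(\<lambda>n. if n \<in> K then 0 else a x n) summable_on UNIV"
      using nonneg_summable_on_iff_summable[of "\<lambda>n. if n \<in> K then 0 else a x n"] nn s by blast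
    have eq: "infsum (\<lambda>n. (cmod (cinner x (f n)))^2) (-K) = infsum (\<lambda>n. if n \<in> K then 0 else a x n) UNIV"
      by (rule infsum_cong_neutral) (auto simp: a_def)
    have eq2: "((\<lambda>n. (cmod (cinner x (f n)))^2) summable_on (-K)) = ((\<lambda>n. if n \<in> K then 0 else a x n) summable_on UNIV)"
      by (rule summable_on_cong_neutral) (auto simp: a_def)
    show ?thesis using eq eq2 su infsum_eq_suminf_nonneg[OF s nn] unfolding T_def by simp
  qed
  show ?thesis
    unfolding frame_on_def
    using A0(1) C0 low up conv
    by (intro exI[of _ "A0 / (1 + C)"] exI[of _ Bo]) auto
qed

end




context frm begin

lemma dim_bound:
  assumes U: "finite U" "l2s.orthonormal U"
    and F0: "finite F0" and syU: "\<And>u. u \<in> U \<Longrightarrow> synth u \<in> cvs.span F0"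
    and E0: "\<And>K. finite K \<Longrightarrow> frame_on (-K) f \<Longrightarrow> card K \<le> E0"
  shows "card U \<le> E0 + card F0"
proof -
  obtain R where R: "R \<subseteq> synth ` U" "cvs.independent R" "synth ` U \<subseteq> cvs.span R"
    using cvs.maximal_independent_subset by blast
  have "R \<subseteq> cvs.span F0" using R(1) syU by blast
  then have Rb: "finite R" "card R \<le> card F0"
    using cvs.independent_span_bound[OF F0 R(2)] by auto
  define U' where "U' = inv_into U synth ` R"
  have U'U: "U' \<subseteq> U" unfolding U'_def using R(1) by (auto intro: inv_into_into)
  have synU': "synth ` U' = R" unfolding U'_def using R(1)
    by (auto simp: image_image f_inv_into_f intro!: image_eqI)
  have injU': "inj_on (inv_into U synth) R" by (rule inj_on_inv_into[OF R(1)])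
  have cU': "card U' = card R" unfolding U'_def by (rule card_image[OF injU'])
  have finU': "finite U'" using U'U U(1) finite_subset by blast
  have injs: "inj_on synth U'"
  proof (rule inj_onI)
    fix u v assume uv: "u \<in> U'" "v \<in> U'" "synth u = synth v"
    obtain r1 where r1: "r1 \<in> R" "u = inv_into U synth r1" using uv(1) U'_def by blast
    obtain r2 where r2: "r2 \<in> R" "v = inv_into U synth r2" using uv(2) U'_def by blast
    have "synth u = r1" using r1 R(1) by (metis f_inv_into_f subsetD)
    moreover have "synth v = r2" using r2 R(1) by (metis f_inv_into_f subsetD)
    ultimately show "u = v" using r1 r2 uv(3) by simp
  qed
  define V where "V = U - U'"
  have finV: "finite V" using U(1) V_def by simp
  have cV: "card V = card U - card U'" unfolding V_def using U'U finU' by (simp add: card_Diff_subset)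
  have "\<exists>cf. synth u = (\<Sum>v\<in>U'. scaleC (cf v) (synth v))" if "u \<in> U" for u
  proof -
    have "synth u \<in> cvs.span (synth ` U')" using R(3) that synU' by blast
    then obtain c where c: "synth u = (\<Sum>r\<in>synth ` U'. scaleC (c r) r)"
      using cvs.span_finite[of "synth ` U'"] finU' by auto
    also have "\<dots> = (\<Sum>v\<in>U'. scaleC (c (synth v)) (synth v))"
      by (rule sum.reindex[OF injs, unfolded comp_def])
    finally show ?thesis by (intro exI[of _ "\<lambda>v. c (synth v)"])
  qed
  then obtain cf where cf: "\<And>u. u \<in> U \<Longrightarrow> synth u = (\<Sum>v\<in>U'. scaleC (cf u v) (synth v))"
    by metis
  define y where "y u = u - (\<Sum>v\<in>U'. scaleC (cf u v) v)" for u
  have sy: "synth (y u) = 0" if "u \<in> U" for u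
    unfolding y_def using cf[OF that] by (simp add: synth_diff synth_sum synth_scaleC)
  have ortho: "ipl u v = (if u = v then 1 else 0)" if "u \<in> U" "v \<in> U" for u v
    using U(2) that unfolding l2s.orthonormal_def by auto
  have bi: "\<forall>i\<in>V. \<forall>j\<in>V. ipl (y i) (id j) = (if i = j then 1 else 0)"
  proof (intro ballI)
    fix i j assume ij: "i \<in> V" "j \<in> V"
    have vj: "ipl v j = 0" if "v \<in> U'" for v
    proof -
      have "v \<in> U" "j \<in> U" "v \<noteq> j" using that ij U'U V_def by auto
      then show ?thesis using ortho by simp
    qed
    have "(\<Sum>v\<in>U'. cf i v * ipl v j) = 0"
      using vj by (intro sum.neutral) simp
    then show "ipl (y i) (id j) = (if i = j then 1 else 0)"
      using ij ortho V_def unfolding y_def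
      by (simp add: l2s.ip_diff_left l2s.ip_sum_left l2s.ip_scaleC_left)
  qed
  obtain K where K: "finite K" "card K = card V"
    "\<forall>k\<in>K. \<exists>w \<in> cvs.span (y ` V). \<forall>l\<in>K. ev w l = (if l = k then 1 else 0)"
    using coord[OF finV bi] by blast
  have "synth w = 0" if "w \<in> cvs.span (y ` V)" for w
    using synth_span[of "y ` V" "{0}" w] that sy V_def by auto
  then have "frame_on (-K) f"
    using K(3) by (intro delete[OF K(1)]) blast
  then have "card K \<le> E0" by (rule E0[OF K(1)])
  then show ?thesis using K(2) cV cU' Rb(2) by linarith
qed

lemma norm_f_le: "(norm (f n))^2 \<le> Bo"
proof (cases "f n = 0")
  case True then show ?thesis using Bo_pos by simp
next
  case False
  have h1: "a (f n) n \<le> suminf (a (f n))"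
    using a_summable a_nonneg by (intro sum_le_suminf[of _ "{n}", simplified]) auto
  have h2: "suminf (a (f n)) \<le> Bo * (norm (f n))^2" by (rule Bo_bound)
  have h3: "a (f n) n = (norm (f n))^2 * (norm (f n))^2"
    by (simp add: a_def cinner_self_norm norm_mult power2_eq_square)
  have h4: "(norm (f n))^2 * (norm (f n))^2 \<le> Bo * (norm (f n))^2"
    using h1 h2 h3 by linarith
  have h5: "(norm (f n))^2 > 0" using False by simp
  show ?thesis by (rule mult_right_le_imp_le[OF h4 h5])
qed

lemma main_sum:
  assumes F0: "finite F0" "range (\<lambda>x. scaleR Bo x - frame_op f x) \<subseteq> cvs.span F0"
    and E0: "\<And>K. finite K \<Longrightarrow> frame_on (-K) f \<Longrightarrow> card K \<le> E0"
  shows "summable (\<lambda>n. Bo - (norm (f n))^2)"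
proof (rule summableI_nonneg_bounded)
  show "0 \<le> Bo - (norm (f n))^2" for n using norm_f_le[of n] by simp
  fix N
  obtain U where U: "finite U" "l2s.orthonormal U" "cvs.span U = cvs.span (d ` {..<N})"
    using l2s.gram_schmidt[of "d ` {..<N}"] by blast
  have sd: "synth (d n) \<in> cvs.span F0" for n
  proof -
    have "scaleR Bo (f n) - frame_op f (f n) \<in> cvs.span F0" using F0(2) by blast
    then show ?thesis unfolding synth_d by (rule cvs.span_scale)
  qed
  have syU: "synth u \<in> cvs.span F0" if "u \<in> U" for u
  proof -
    have "u \<in> cvs.span (d ` {..<N})" using that U(3) cvs.span_base[of u U] by blast
    then show ?thesis using synth_span[of "d ` {..<N}" "cvs.span F0" u] sd by blast
  qed
  have cU: "card U \<le> E0 + card F0" by (rule dim_bound[OF U(1,2) F0(1) syU E0])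
  have "(\<Sum>n<N. (1 - (norm (f n))^2 / Bo)) \<le> 2 * real (card U)"
    using U by (intro trace_bound) (auto intro: cvs.span_base)
  moreover have "real (card U) \<le> real (E0 + card F0)" using cU by (simp only: of_nat_le_iff)
  ultimately have "(\<Sum>n<N. (1 - (norm (f n))^2 / Bo)) \<le> 2 * real (E0 + card F0)"
    by (rule order_trans[OF _ mult_left_mono]) simp
  then have "Bo * (\<Sum>n<N. (1 - (norm (f n))^2 / Bo)) \<le> Bo * (2 * real (E0 + card F0))"
    using Bo_pos by (intro mult_left_mono) auto
  moreover have "Bo * (\<Sum>n<N. (1 - (norm (f n))^2 / Bo)) = (\<Sum>n<N. Bo - (norm (f n))^2)"
    using Bo_pos by (simp add: sum_distrib_left algebra_simps)
  ultimately show "(\<Sum>n<N. Bo - (norm (f n))^2) \<le> Bo * (2 * real (E0 + card F0))" by simp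
qed

end

theorem proposition3p6:
  fixes f :: "nat \<Rightarrow> 'a::{complex_inner, complete_space}"
  assumes "separable_space (euclidean :: 'a topology)"
    and "\<not> finite_dim_c (UNIV :: 'a set)"
    and "frame f"
    and "B = opt_upper_bound f"
    and "excess f < \<infinity>"
    and "finite_dim_c (range (\<lambda>x. scaleR B x - frame_op f x))"
  shows "summable (\<lambda>n. B - (norm (f n))\<^sup>2)"
proof -
  have nt: "\<exists>x::'a. x \<noteq> 0"
  proof (rule ccontr)
    assume "\<not> (\<exists>x::'a. x \<noteq> 0)"
    then have "(UNIV :: 'a set) \<subseteq> cspan {}" by (auto simp: cspan_eq)
    then show False using assms(2) unfolding finite_dim_c_def by blast
  qed
  interpret frm f by unfold_locales (use assms(3) nt in auto)
  have BB: "B = Bo" using assms(4) by (simp add: Bo_def)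
  obtain F0 where F0: "finite F0" "range (\<lambda>x. scaleR B x - frame_op f x) \<subseteq> cvs.span F0"
    using assms(6) unfolding finite_dim_c_def cspan_eq by blast
  obtain E0 where E0: "excess f = enat E0" using assms(5) by (cases "excess f") auto
  have E0b: "card K \<le> E0" if "finite K" "frame_on (-K) f" for K
  proof -
    have "ecard K \<in> {ecard S | S. frame_on (- S) f}" using that by blast
    then have "ecard K \<le> excess f" unfolding excess_def by (rule Sup_upper)
    then show ?thesis using that(1) E0 by (simp add: ecard_def)
  qed
  show ?thesis using main_sum[OF F0[unfolded BB] E0b] BB by simp
qed



end
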